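(* Let $R$ be a commutative Noetherian ring, $s\in R$ and $r\ge2$. Then there exists $k\in\mathbb{N}$ such that for every column $b^+=(b_1,\ldots,b_r)^t\in R^r$ with $s\in\langle b_1,\ldots,b_r\rangle$ and every column $b^-=(b_{-r},\ldots,b_{-1})^t\in R^r$ such that $\sum_{i=1}^rb_ib_{-i}=0$ and every entry $b_{-i}$ is divisible by $s^k$, there exists $M\in\Theta(r,R)$ with $b^-=Mb^+$.
   Context: For an $r\times r$ matrix $g$ with rows and columns indexed $1,\ldots,r$, its antidiagonal transpose $g^{\tau}$ has entries $(g^\tau)_{i,j}=g_{r+1-j,r+1-i}$. $\Theta(r,R)$ is the set of $r\times r$ matrices $M$ over $R$ with $M^{\tau}=-M$ and all antidiagonal entries $M_{i,r+1-i}$ equal to zero. *)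

theory Defs
  imports "HOL-Algebra.Ring_Divisibility" "HOL-Algebra.Ideal"
begin

text \<open>Vectors and matrices over the ring R are represented as functions on
  natural-number indices; only indices in 1..r are relevant.\<close>

definition Theta :: "('a, 'b) ring_scheme \<Rightarrow> nat \<Rightarrow> (nat \<Rightarrow> nat \<Rightarrow> 'a) set" where
  "Theta R r = {M. (\<forall>i\<in>{1..r}. \<forall>j\<in>{1..r}. M i j \<in> carrier R)
     \<and> (\<forall>i\<in>{1..r}. \<forall>j\<in>{1..r}. M (r + 1 - j) (r + 1 - i) = \<ominus>\<^bsub>R\<^esub> M i j)
     \<and> (\<forall>i\<in>{1..r}. M i (r + 1 - i) = \<zero>\<^bsub>R\<^esub>)}"

end

theory Submission
  imports Defs
begin

lemma (in cring) genideal_finsum_repr: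
  assumes fin: "finite A" and b: "\<forall>i\<in>A. b i \<in> carrier R" and x: "x \<in> Idl (b ` A)"
  shows "\<exists>a. (\<forall>i\<in>A. a i \<in> carrier R) \<and> x = (\<Oplus>i\<in>A. a i \<otimes> b i)"
proof -
  define S where "S = {y. \<exists>a. (\<forall>i\<in>A. a i \<in> carrier R) \<and> y = (\<Oplus>i\<in>A. a i \<otimes> b i)}"
  have Scar: "S \<subseteq> carrier R"
    unfolding S_def using b by (auto intro!: finsum_closed)
  have mult: "u \<otimes> y \<in> S" if "y \<in> S" "u \<in> carrier R" for u y
  proof -
    from that obtain a where a: "\<forall>i\<in>A. a i \<in> carrier R" "y = (\<Oplus>i\<in>A. a i \<otimes> b i)"
      unfolding S_def by blast
    have "u \<otimes> y = (\<Oplus>i\<in>A. u \<otimes> (a i \<otimes> b i))"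
      using a b fin that(2) by (simp add: finsum_rdistr Pi_def)
    also have "\<dots> = (\<Oplus>i\<in>A. (u \<otimes> a i) \<otimes> b i)"
      using a b that(2) by (intro finsum_cong') (auto simp: m_assoc)
    finally have "u \<otimes> y = (\<Oplus>i\<in>A. (\<lambda>i. u \<otimes> a i) i \<otimes> b i)" by simp
    moreover have "\<forall>i\<in>A. (\<lambda>i. u \<otimes> a i) i \<in> carrier R" using a that(2) by auto
    ultimately show ?thesis unfolding S_def by (intro CollectI exI conjI)
  qed
  have add: "y \<oplus> z \<in> S" if "y \<in> S" "z \<in> S" for y z
  proof -
    from that obtain a a' where a: "\<forall>i\<in>A. a i \<in> carrier R" "y = (\<Oplus>i\<in>A. a i \<otimes> b i)"
      and a': "\<forall>i\<in>A. a' i \<in> carrier R" "z = (\<Oplus>i\<in>A. a' i \<otimes> b i)"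
      unfolding S_def by blast
    have "y \<oplus> z = (\<Oplus>i\<in>A. a i \<otimes> b i \<oplus> a' i \<otimes> b i)"
      using a a' b by (simp add: finsum_addf Pi_def)
    also have "\<dots> = (\<Oplus>i\<in>A. (a i \<oplus> a' i) \<otimes> b i)"
      using a a' b by (intro finsum_cong') (auto simp: l_distr)
    finally have "y \<oplus> z = (\<Oplus>i\<in>A. (\<lambda>i. a i \<oplus> a' i) i \<otimes> b i)" by simp
    moreover have "\<forall>i\<in>A. (\<lambda>i. a i \<oplus> a' i) i \<in> carrier R" using a a' by auto
    ultimately show ?thesis unfolding S_def by (intro CollectI exI conjI)
  qed
  have zero: "\<zero> \<in> S"
  proof -
    have "(\<Oplus>i\<in>A. \<zero> \<otimes> b i) = (\<Oplus>i\<in>A. \<zero>)" using b by (intro finsum_cong') auto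
    then have "\<zero> = (\<Oplus>i\<in>A. (\<lambda>i. \<zero>) i \<otimes> b i)" by (simp add: finsum_zero)
    then show ?thesis unfolding S_def by (intro CollectI exI conjI) auto
  qed
  have "ideal S R"
  proof (rule idealI)
    show "ring R" by (rule ring_axioms)
    have neg: "\<ominus> y \<in> S" if "y \<in> S" for y
    proof -
      have "\<ominus> y = (\<ominus> \<one>) \<otimes> y" using that Scar by (simp add: l_minus subsetD)
      then show ?thesis using mult[OF that] by simp
    qed
    show "subgroup S (add_monoid R)"
      apply (rule add.subgroupI)
      using Scar zero add neg by auto
    show "u \<otimes> y \<in> S" if "y \<in> S" "u \<in> carrier R" for u y using mult that by blast
    show "y \<otimes> u \<in> S" if "y \<in> S" "u \<in> carrier R" for u y
      using mult[OF that] that Scar by (simp add: m_comm subsetD)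
  qed
  moreover have "b ` A \<subseteq> S"
  proof
    fix y assume "y \<in> b ` A"
    then obtain j where j: "j \<in> A" "y = b j" by blast
    define a where "a = (\<lambda>i. if i = j then \<one> else \<zero>)"
    have "(\<Oplus>i\<in>A. a i \<otimes> b i) = (\<Oplus>i\<in>A. if i = j then b i else \<zero>)"
      using b by (intro finsum_cong') (auto simp: a_def)
    also have "\<dots> = b j" using j b fin by (intro add.finprod_singleton_swap) auto
    finally have "y = (\<Oplus>i\<in>A. a i \<otimes> b i)" using j by simp
    moreover have "\<forall>i\<in>A. a i \<in> carrier R" by (simp add: a_def)
    ultimately show "y \<in> S" unfolding S_def by (intro CollectI exI conjI)
  qed
  ultimately have "Idl (b ` A) \<subseteq> S" by (rule genideal_minimal)
  with x show ?thesis unfolding S_def by blast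
qed

lemma ann_stable:
  fixes R (structure)
  assumes "cring R" and "noetherian_ring R" and s: "s \<in> carrier R"
  shows "\<exists>N. \<forall>x\<in>carrier R. s [^] (Suc N) \<otimes> x = \<zero> \<longrightarrow> s [^] N \<otimes> x = \<zero>"
proof -
  interpret cring R by fact
  interpret noetherian_ring R by fact
  define Ann where "Ann n = {x \<in> carrier R. s [^] (n::nat) \<otimes> x = \<zero>}" for n
  have Ann_car: "Ann n \<subseteq> carrier R" for n unfolding Ann_def by auto
  have ideal: "ideal (Ann n) R" for n
  proof (rule idealI)
    show "ring R" by (rule ring_axioms)
    have sn: "s [^] n \<in> carrier R" using s by simp
    show "subgroup (Ann n) (add_monoid R)"
      apply (rule add.subgroupI)
      using sn unfolding Ann_def by (auto simp: r_distr r_minus)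
    show "u \<otimes> y \<in> Ann n" if "y \<in> Ann n" "u \<in> carrier R" for u y
      using that sn unfolding Ann_def by (auto simp: m_lcomm)
    show "y \<otimes> u \<in> Ann n" if "y \<in> Ann n" "u \<in> carrier R" for u y
    proof -
      have y: "y \<in> carrier R" using that unfolding Ann_def by auto
      have "s [^] n \<otimes> (y \<otimes> u) = (s [^] n \<otimes> y) \<otimes> u" using y that(2) sn by (simp add: m_assoc)
      then show ?thesis using that sn unfolding Ann_def by auto
    qed
  qed
  have step: "Ann n \<subseteq> Ann (Suc n)" for n
  proof
    fix x assume x: "x \<in> Ann n"
    have "s [^] Suc n \<otimes> x = s \<otimes> (s [^] n \<otimes> x)"
    proof -
      have xc: "x \<in> carrier R" using x Ann_car by blast
      have "s [^] Suc n \<otimes> x = (s [^] n \<otimes> s) \<otimes> x" using s by (simp add: nat_pow_Suc)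
      also have "\<dots> = (s \<otimes> s [^] n) \<otimes> x" using s by (simp add: m_comm)
      also have "\<dots> = s \<otimes> (s [^] n \<otimes> x)" using s xc by (simp add: m_assoc)
      finally show ?thesis .
    qed
    then show "x \<in> Ann (Suc n)" using x s unfolding Ann_def by auto
  qed
  have mono: "m \<le> n \<Longrightarrow> Ann m \<subseteq> Ann n" for m n
    by (rule lift_Suc_mono_le[of Ann, OF step]) 
  have tot: "\<forall>x\<in>range Ann. \<forall>y\<in>range Ann. x \<subseteq> y \<or> y \<subseteq> x"
    using mono nle_le by (metis rangeE)
  have chain: "subset.chain {I. ideal I R} (range Ann)"
    unfolding pred_on.chain_def using tot ideal by blast
  have "\<Union>(range Ann) \<in> range Ann"
    by (rule ideal_chain_is_trivial) (use chain in auto)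
  then obtain N where N: "\<Union>(range Ann) = Ann N" by blast
  have "Ann (Suc N) \<subseteq> Ann N" using N by blast
  then show ?thesis unfolding Ann_def by blast
qed

lemma (in cring) antisym_aux:
  assumes "x \<in> carrier R" "y \<in> carrier R" "z \<in> carrier R" "w \<in> carrier R"
  shows "z \<otimes> y \<ominus> w \<otimes> x = \<ominus> (x \<otimes> w \<ominus> y \<otimes> z)"
  using assms by (simp add: a_minus_def minus_add m_comm a_comm)

lemma (in cring) diag_aux:
  assumes "x \<in> carrier R" "y \<in> carrier R"
  shows "x \<otimes> y \<ominus> y \<otimes> x = \<zero>"
  using assms by (simp add: a_minus_def m_comm r_neg)

theorem lemma11:
  fixes R (structure) and s :: 'a and r :: nat
  assumes "cring R" and "noetherian_ring R" and "s \<in> carrier R" and "r \<ge> 2"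
  shows "\<exists>k::nat. \<forall>bp bm :: nat \<Rightarrow> 'a.
           (\<forall>i\<in>{1..r}. bp i \<in> carrier R) \<and> (\<forall>i\<in>{1..r}. bm i \<in> carrier R)
           \<and> s \<in> Idl (bp ` {1..r})
           \<and> (\<Oplus>i\<in>{1..r}. bp i \<otimes> bm i) = \<zero>
           \<and> (\<forall>i\<in>{1..r}. (s [^] k) divides (bm i))
           \<longrightarrow> (\<exists>M\<in>Theta R r. \<forall>i\<in>{1..r}. bm (r + 1 - i) = (\<Oplus>j\<in>{1..r}. M i j \<otimes> bp j))"
proof -
  interpret cring R by fact
  have s: "s \<in> carrier R" by fact
  obtain N where N: "\<forall>x\<in>carrier R. s [^] (Suc N) \<otimes> x = \<zero> \<longrightarrow> s [^] N \<otimes> x = \<zero>"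
    using ann_stable[OF assms(1,2,3)] by blast
  define A where "A = {1..r}"
  have finA: "finite A" unfolding A_def by simp
  have flip: "r + 1 - i \<in> A" if "i \<in> A" for i using that unfolding A_def by auto
  have flip2: "r + 1 - (r + 1 - i) = i" if "i \<in> A" for i using that unfolding A_def by auto
  show ?thesis
  proof (rule exI[of _ "Suc N"], intro allI impI, elim conjE)
    fix bp bm :: "nat \<Rightarrow> 'a"
    assume bp: "\<forall>i\<in>{1..r}. bp i \<in> carrier R" and bm: "\<forall>i\<in>{1..r}. bm i \<in> carrier R"
      and sI: "s \<in> Idl (bp ` {1..r})" and orth: "(\<Oplus>i\<in>{1..r}. bp i \<otimes> bm i) = \<zero>"
      and dv: "\<forall>i\<in>{1..r}. (s [^] Suc N) divides (bm i)"
    note bp = bp[folded A_def] and bm = bm[folded A_def] and sI = sI[folded A_def]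
      and orth = orth[folded A_def] and dv = dv[folded A_def]
    obtain a where a: "\<forall>i\<in>A. a i \<in> carrier R" and sa: "s = (\<Oplus>j\<in>A. a j \<otimes> bp j)"
      using genideal_finsum_repr[OF finA bp sI] by blast
    have "\<forall>i\<in>A. \<exists>c\<in>carrier R. bm i = s [^] Suc N \<otimes> c"
      using dv unfolding factor_def by blast
    then obtain d where d: "\<forall>i\<in>A. d i \<in> carrier R" and bmd: "\<forall>i\<in>A. bm i = s [^] Suc N \<otimes> d i"
      by metis
    define c where "c i = s [^] N \<otimes> d i" for i
    have c: "\<forall>i\<in>A. c i \<in> carrier R" using d s unfolding c_def by auto
    have bmc: "bm i = c i \<otimes> s" if "i \<in> A" for i
    proof -
      have "bm i = (s [^] N \<otimes> s) \<otimes> d i" using bmd that by (simp add: nat_pow_Suc)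
      also have "\<dots> = c i \<otimes> s" unfolding c_def using s d that by (simp add: m_assoc m_comm m_lcomm)
      finally show ?thesis .
    qed
    define t where "t = (\<Oplus>j\<in>A. d j \<otimes> bp j)"
    have t: "t \<in> carrier R" unfolding t_def using d bp by (auto intro!: finsum_closed)
    have "s [^] Suc N \<otimes> t = (\<Oplus>j\<in>A. s [^] Suc N \<otimes> (d j \<otimes> bp j))"
      unfolding t_def using d bp s finA by (simp add: finsum_rdistr Pi_def)
    also have "\<dots> = (\<Oplus>j\<in>A. bp j \<otimes> bm j)"
    proof (intro finsum_cong')
      fix j assume j: "j \<in> A"
      have S: "s [^] Suc N \<in> carrier R" using s by simp
      have dj: "d j \<in> carrier R" and bj: "bp j \<in> carrier R" using d bp j by auto
      have "s [^] Suc N \<otimes> (d j \<otimes> bp j) = s [^] Suc N \<otimes> (bp j \<otimes> d j)"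
        using dj bj by (simp only: m_comm)
      also have "\<dots> = bp j \<otimes> (s [^] Suc N \<otimes> d j)" by (rule m_lcomm[OF S bj dj])
      also have "\<dots> = bp j \<otimes> bm j" using bmd j by simp
      finally show "s [^] Suc N \<otimes> (d j \<otimes> bp j) = bp j \<otimes> bm j" .
    qed (use d bp bm s in auto)
    finally have "s [^] Suc N \<otimes> t = \<zero>" using orth by simp
    then have "s [^] N \<otimes> t = \<zero>" using N t by blast
    moreover have "s [^] N \<otimes> t = (\<Oplus>j\<in>A. c j \<otimes> bp j)"
    proof -
      have "s [^] N \<otimes> t = (\<Oplus>j\<in>A. s [^] N \<otimes> (d j \<otimes> bp j))"
        unfolding t_def using d bp s finA by (simp add: finsum_rdistr Pi_def)
      also have "\<dots> = (\<Oplus>j\<in>A. c j \<otimes> bp j)"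
        unfolding c_def using d bp s by (intro finsum_cong') (auto simp: m_assoc)
      finally show ?thesis .
    qed
    ultimately have cb: "(\<Oplus>j\<in>A. c j \<otimes> bp j) = \<zero>" by simp
    define Nm where "Nm i j = c i \<otimes> a j \<ominus> a i \<otimes> c j" for i j
    have Nm_row: "(\<Oplus>j\<in>A. Nm i j \<otimes> bp j) = c i \<otimes> s" if i: "i \<in> A" for i
    proof -
      have ci: "c i \<in> carrier R" and ai: "a i \<in> carrier R" using c a i by auto
      have "(\<Oplus>j\<in>A. Nm i j \<otimes> bp j)
          = (\<Oplus>j\<in>A. c i \<otimes> (a j \<otimes> bp j) \<oplus> (\<ominus> a i) \<otimes> (c j \<otimes> bp j))"
        unfolding Nm_def using ci ai a c bp
        by (intro finsum_cong') (auto simp: a_minus_def l_distr m_assoc l_minus)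
      also have "\<dots> = (\<Oplus>j\<in>A. c i \<otimes> (a j \<otimes> bp j)) \<oplus> (\<Oplus>j\<in>A. (\<ominus> a i) \<otimes> (c j \<otimes> bp j))"
        using ci ai a c bp by (intro finsum_addf) (auto simp: Pi_def)
      also have "\<dots> = c i \<otimes> s \<oplus> (\<ominus> a i) \<otimes> (\<Oplus>j\<in>A. c j \<otimes> bp j)"
        unfolding sa using ci ai a c bp finA by (simp add: finsum_rdistr Pi_def)
      also have "\<dots> = c i \<otimes> s" using cb ci ai s by simp
      finally show ?thesis .
    qed
    define M where "M i j = Nm (r + 1 - i) j" for i j
    have "M \<in> Theta R r"
      unfolding Theta_def mem_Collect_eq A_def[symmetric]
    proof (intro conjI ballI)
      fix i j assume i: "i \<in> A" and j: "j \<in> A"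
      show "M i j \<in> carrier R" unfolding M_def Nm_def using flip[OF i] j a c by auto
      show "M (r + 1 - j) (r + 1 - i) = \<ominus> M i j"
        unfolding M_def Nm_def flip2[OF j] using flip[OF i] j a c
        by (intro antisym_aux) auto
    next
      fix i assume i: "i \<in> A"
      show "M i (r + 1 - i) = \<zero>" unfolding M_def Nm_def using flip[OF i] a c
        by (intro diag_aux) auto
    qed
    moreover have "\<forall>i\<in>A. bm (r + 1 - i) = (\<Oplus>j\<in>A. M i j \<otimes> bp j)"
      unfolding M_def using Nm_row flip bmc by simp
    ultimately show "\<exists>M\<in>Theta R r. \<forall>i\<in>{1..r}. bm (r + 1 - i) = (\<Oplus>j\<in>{1..r}. M i j \<otimes> bp j)"
      unfolding A_def by blast
  qed
qed

end
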